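(* Let $g(X)=X^r+\sum_{i=0}^{r-1}m_iX^i\in\mathbb{F}_2[X]$ have degree $r\ge 1$, and let $f\in\mathbb{F}_2[X]$ with $\deg f<r$ be the initial load of the Galois-mode LFSR with connection polynomial $g$. Let $(a_k)_{k\ge 0}$ be its output sequence, i.e. $a_k$ is the coefficient of $X^{r-1}$ in $X^kf \bmod g$. Then for every $k\ge 0$, \[ \deg\bigl(X^kf \bmod g\bigr)=r-1-\max\{j\ge 0: a_k=a_{k+1}=\dots=a_{k+j-1}=0\}, \] where the maximum is taken to be $0$ if $a_k=1$.
   Context: The Galois-mode LFSR of length $r$ with connection polynomial $g$ has states $(f_0,\dots,f_{r-1})\in\mathbb{F}_2^r$, identified with $f(X)=\sum_{i=0}^{r-1}f_iX^i$, and transition $(f_0,\dots,f_{r-1})\mapsto(m_0f_{r-1},f_0+m_1f_{r-1},\dots,f_{r-2}+m_{r-1}f_{r-1})$; the state after $k$ steps is $X^kf\bmod g$, and the output at step $k$ is the last coordinate $f_{r-1}$ of the current state. Conventions: $\deg(0)=-\infty$, and the maximum of an unbounded set is $+\infty$. *)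

theory Defs
  imports "HOL-Computational_Algebra.Polynomial" "HOL-Library.Z2" "HOL-Library.Extended_Real"
begin

definition pdeg :: "'a::zero poly \<Rightarrow> ereal" where
  "pdeg p = (if p = 0 then -\<infinity> else ereal (real (degree p)))"

definition lfsr_out :: "bit poly \<Rightarrow> bit poly \<Rightarrow> nat \<Rightarrow> bit" where
  "lfsr_out g f k = coeff ((monom 1 k * f) mod g) (degree g - 1)"

definition zero_run :: "(nat \<Rightarrow> bit) \<Rightarrow> nat \<Rightarrow> enat" where
  "zero_run a k = Sup (enat ` {j. \<forall>i<j. a (k + i) = 0})"

end

theory Submission
  imports Defs
begin

lemma step_eq:
  fixes g f :: "bit poly"
  shows "lfsr_out g f (k + i) = coeff ((monom 1 i * ((monom 1 k * f) mod g)) mod g) (degree g - 1)"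
proof -
  have "monom (1::bit) (k + i) * f = monom 1 i * (monom 1 k * f)"
  proof -
    have "monom 1 i * monom 1 k = monom (1::bit) (k+i)" by (simp add: mult_monom add.commute)
    then show ?thesis by (metis mult.assoc)
  qed
  then show ?thesis unfolding lfsr_out_def mod_mult_right_eq by (simp only:)
qed

theorem theorem3:
  fixes g f :: "bit poly" and r k :: nat
  assumes "degree g = r" and "r \<ge> 1" and "lead_coeff g = 1"
    and "degree f < r"
  shows "pdeg ((monom 1 k * f) mod g)
         = ereal (real r - 1) - ereal_of_enat (zero_run (lfsr_out g f) k)"
proof -
  define s where "s = (monom 1 k * f) mod g"
  have g0: "g \<noteq> 0" using assms by auto
  have ds: "s = 0 \<or> degree s < r" using degree_mod_less[OF g0] assms unfolding s_def by auto
  show ?thesis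
  proof (cases "s = 0")
    case True
    have "\<And>i. lfsr_out g f (k + i) = 0" using True by (simp add: step_eq s_def[symmetric])
    then have "{j. \<forall>i<j. lfsr_out g f (k + i) = 0} = UNIV" by auto
    then have "zero_run (lfsr_out g f) k = \<infinity>" unfolding zero_run_def
    proof (simp)
      show "Sup (range enat) = \<infinity>"
      proof (rule ccontr)
        assume "Sup (range enat) \<noteq> \<infinity>"
        then obtain n where n: "Sup (range enat) = enat n" by auto
        have "enat (Suc n) \<le> Sup (range enat)" by (rule Sup_upper) auto
        then show False using n by simp
      qed
    qed
    then show ?thesis using True by (simp add: pdeg_def s_def[symmetric])
  next
    case False
    define d where "d = degree s"
    have dr: "d < r" using ds False d_def by auto
    have mi: "(monom 1 i * s) mod g = monom 1 i * s" if "i \<le> r - 1 - d" for i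
    proof (rule mod_poly_less)
      show "degree (monom 1 i * s) < degree g" using that dr False assms(1)
        by (simp add: degree_mult_eq degree_monom_eq d_def)
    qed
    have out: "lfsr_out g f (k + i) = coeff s (r - 1 - i)" if "i \<le> r - 1 - d" for i
    proof -
      have "\<not> r - 1 < i" using that by simp
      then show ?thesis
      using mi[OF that] that dr by (simp add: step_eq s_def[symmetric] assms(1) coeff_monom_mult)
    qed
    have z: "lfsr_out g f (k + i) = 0" if "i < r - 1 - d" for i
      using out[of i] that by (simp add: coeff_eq_0 d_def)
    have o: "lfsr_out g f (k + (r - 1 - d)) \<noteq> 0"
      using out[of "r-1-d"] dr False by (simp add: d_def)
    have S: "{j. \<forall>i<j. lfsr_out g f (k + i) = 0} = {..r - 1 - d}"
    proof (rule set_eqI, rule iffI)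
      fix j assume "j \<in> {j. \<forall>i<j. lfsr_out g f (k + i) = 0}"
      then have "\<forall>i<j. lfsr_out g f (k + i) = 0" by simp
      then have "\<not> (r - 1 - d < j)" using o by blast
      then show "j \<in> {..r - 1 - d}" by simp
    next
      fix j assume "j \<in> {..r - 1 - d}"
      then show "j \<in> {j. \<forall>i<j. lfsr_out g f (k + i) = 0}" using z by auto
    qed
    have "zero_run (lfsr_out g f) k = enat (r - 1 - d)"
      unfolding zero_run_def S
      by (rule antisym) (auto intro!: Sup_least Sup_upper)
    then show ?thesis using False dr
      by (simp add: pdeg_def s_def[symmetric] d_def[symmetric] of_nat_diff)
  qed
qed

end
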